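(* Let $U:\mathbb{R}^d\to\mathbb{R}$ satisfy: (A1) $U$ is continuously differentiable and $\|\nabla U(x)-\nabla U(y)\|_2\le L\|x-y\|_2$ for all $x,y$, for some $L>0$; (A2) $\nabla U(0)=0$; (A3) there exist $m,R>0$ such that for all $x,y\in\mathbb{R}^d$ with $\|x-y\|_2>R$, $\langle\nabla U(x)-\nabla U(y),x-y\rangle\ge m\|x-y\|_2^2$. Let $\kappa=L/m$, $c=1000$, and let $p^*$ be the probability measure on $\mathbb{R}^{2d}$ with density $p^*(x,u)\propto\exp\big(-U(x)-\frac{c\kappa L}{2}\|u\|_2^2\big)$. Then $$\mathbb{E}_{(x,u)\sim p^*}\big[\|x\|_2^2+\|x+u\|_2^2\big]\le36(R^2+d/m).$$ *)

theory Defs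
  imports "HOL-Analysis.Analysis"
begin

definition pstar_dens :: "('a::euclidean_space \<Rightarrow> real) \<Rightarrow> real \<Rightarrow> real \<Rightarrow> 'a \<times> 'a \<Rightarrow> real" where
  "pstar_dens U L m = (\<lambda>(x, u). exp (- U x - (1000 * (L / m) * L / 2) * (norm u)\<^sup>2))"

end

theory Submission
  imports Defs "HOL-Analysis.Analysis"
begin

lemma loc_fin:
  fixes h :: "'a::euclidean_space \<Rightarrow> real"
  assumes cont: "continuous_on UNIV h" and S: "bounded S" and [measurable]: "S \<in> sets borel"
  shows "(\<integral>\<^sup>+x. ennreal (h x) * indicator S x \<partial>lborel) < \<infinity>"
proof -
  have "compact (closure S)" using S by (simp add: compact_closure)
  then have "compact (h ` closure S)"
    using compact_continuous_image continuous_on_subset cont by blast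
  then obtain B where B: "\<And>x. x \<in> closure S \<Longrightarrow> norm (h x) \<le> B"
    using compact_imp_bounded bounded_iff by (metis imageI)
  have hm[measurable]: "h \<in> borel_measurable borel" using cont borel_measurable_continuous_onI by blast
  have "(\<integral>\<^sup>+x. ennreal (h x) * indicator S x \<partial>lborel) \<le> (\<integral>\<^sup>+x. ennreal B * indicator S x \<partial>lborel)"
  proof (rule nn_integral_mono)
    fix x show "ennreal (h x) * indicator S x \<le> ennreal B * indicator S x"
      using B[of x] closure_subset[of S] by (auto simp: indicator_def intro!: ennreal_leI)
  qed
  also have "\<dots> = ennreal B * emeasure lborel S" by (simp add: nn_integral_cmult_indicator)
  also have "\<dots> < \<infinity>" using emeasure_bounded_finite[OF S] by (simp add: ennreal_mult_less_top)
  finally show ?thesis .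
qed

lemma zpos:
  fixes f :: "'a::euclidean_space \<Rightarrow> real"
  assumes [measurable]: "f \<in> borel_measurable borel" and pos: "\<And>x. f x > 0"
  shows "0 < (\<integral>\<^sup>+x. ennreal (f x) \<partial>lborel)"
proof (rule ccontr)
  assume "\<not> ?thesis"
  then have "(\<integral>\<^sup>+x. ennreal (f x) \<partial>lborel) = 0" by (simp add: not_less)
  then have "AE x in lborel. ennreal (f x) = 0" by (subst (asm) nn_integral_0_iff_AE) auto
  then have "AE x in (lborel::'a measure). False" using pos by (auto elim!: AE_mp simp: less_le)
  then have "UNIV \<in> null_sets (lborel::'a measure)" by (simp add: AE_iff_null_sets)
  then show False by (simp add: null_sets_def)
qed

lemma nn_scale:
  fixes f :: "'a::euclidean_space \<Rightarrow> ennreal" and c :: real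
  assumes [measurable]: "f \<in> borel_measurable borel" and c: "c \<noteq> 0"
  shows "(\<integral>\<^sup>+x. f x \<partial>lborel) = ennreal (\<bar>c\<bar> ^ DIM('a)) * (\<integral>\<^sup>+x. f (c *\<^sub>R x) \<partial>lborel)"
  apply (subst lborel_affine[OF c, of 0])
  apply (simp add: nn_integral_density nn_integral_distr nn_integral_cmult)
  done

definition ann :: "real \<Rightarrow> real \<Rightarrow> 'a::euclidean_space set" where
  "ann a b = {x. a < norm x \<and> norm x \<le> b}"

lemma ann_meas[measurable]: "ann a b \<in> sets borel"
  unfolding ann_def by measurable

lemma cball_meas[measurable]: "cball (0::'a::euclidean_space) r \<in> sets borel"
  by simp

lemma ann_bounded: "bounded (ann a b)"
  unfolding ann_def bounded_iff by auto

lemma key_step: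
  fixes f :: "'a::euclidean_space \<Rightarrow> real"
  assumes cont: "continuous_on UNIV f" and pos: "\<And>x. f x > 0"
    and rho: "\<rho> > 0" and s: "s > 1" and q: "q \<ge> 0" and q': "q' \<ge> 0" "q' < 1"
    and H1: "\<And>x. \<rho> < norm x \<Longrightarrow> norm x \<le> s*\<rho> \<Longrightarrow> s^(DIM('a)+2) * f (s *\<^sub>R x) \<le> q * f x"
    and H2: "\<And>x. s*\<rho> < norm x \<Longrightarrow> s^(DIM('a)+2) * f (s *\<^sub>R x) \<le> q' * f x"
    and M: "M \<ge> s * \<rho>"
  shows "(\<integral>\<^sup>+x. ennreal ((norm x)^2 * f x) * indicator (ann (s*\<rho>) M) x \<partial>lborel)
     \<le> ennreal q * (\<integral>\<^sup>+x. ennreal ((norm x)^2 * f x) * indicator (ann \<rho> (s*\<rho>)) x \<partial>lborel)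
       + ennreal q' * (\<integral>\<^sup>+x. ennreal ((norm x)^2 * f x) * indicator (ann (s*\<rho>) M) x \<partial>lborel)"
proof -
  have fm[measurable]: "f \<in> borel_measurable borel" using cont borel_measurable_continuous_onI by blast
  define g where "g x = (norm x)^2 * f x" for x :: 'a
  have gm[measurable]: "g \<in> borel_measurable borel" unfolding g_def by measurable
  have "(\<integral>\<^sup>+x. ennreal (g x) * indicator (ann (s*\<rho>) M) x \<partial>lborel)
     \<le> (\<integral>\<^sup>+x. ennreal (g x) * indicator (ann (s*\<rho>) (s*M)) x \<partial>lborel)"
  proof (rule nn_integral_mono)
    fix x
    have "0 < s * \<rho>" using s rho by simp
    then have "0 \<le> M" using M by linarith
    then have "M \<le> s * M" using mult_right_mono[of 1 s M] s by simp
    then show "ennreal (g x) * indicator (ann (s*\<rho>) M) x \<le> ennreal (g x) * indicator (ann (s*\<rho>) (s*M)) x"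
      by (auto simp: indicator_def ann_def)
  qed
  also have "\<dots> = ennreal (s ^ DIM('a)) * (\<integral>\<^sup>+x. ennreal (g (s *\<^sub>R x)) * indicator (ann (s*\<rho>) (s*M)) (s *\<^sub>R x) \<partial>lborel)"
    using s by (subst nn_scale[where c=s]) auto
  also have "\<dots> = (\<integral>\<^sup>+x. ennreal (s ^ DIM('a) * g (s *\<^sub>R x)) * indicator (ann \<rho> M) x \<partial>lborel)"
  proof -
    have ind: "indicator (ann (s*\<rho>) (s*M)) (s *\<^sub>R x) = (indicator (ann \<rho> M) x :: ennreal)" for x
      using s by (auto simp: indicator_def ann_def)
    have "ennreal (s ^ DIM('a)) * (\<integral>\<^sup>+x. ennreal (g (s *\<^sub>R x)) * indicator (ann (s*\<rho>) (s*M)) (s *\<^sub>R x) \<partial>lborel)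
       = (\<integral>\<^sup>+x. ennreal (s ^ DIM('a)) * (ennreal (g (s *\<^sub>R x)) * indicator (ann (s*\<rho>) (s*M)) (s *\<^sub>R x)) \<partial>lborel)"
      by (rule nn_integral_cmult[symmetric]) measurable
    also have "\<dots> = (\<integral>\<^sup>+x. ennreal (s ^ DIM('a) * g (s *\<^sub>R x)) * indicator (ann \<rho> M) x \<partial>lborel)"
      using s by (intro nn_integral_cong) (simp add: ind ennreal_mult' mult.assoc)
    finally show ?thesis .
  qed
  also have "\<dots> \<le> (\<integral>\<^sup>+x. ennreal q * (ennreal (g x) * indicator (ann \<rho> (s*\<rho>)) x)
                    + ennreal q' * (ennreal (g x) * indicator (ann (s*\<rho>) M) x) \<partial>lborel)"
  proof (rule nn_integral_mono)
    fix x
    have eq: "s ^ DIM('a) * g (s *\<^sub>R x) = (norm x)^2 * (s^(DIM('a)+2) * f (s *\<^sub>R x))"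
      using s by (simp add: g_def power_mult_distrib power_add power2_eq_square)
    show "ennreal (s ^ DIM('a) * g (s *\<^sub>R x)) * indicator (ann \<rho> M) x
       \<le> ennreal q * (ennreal (g x) * indicator (ann \<rho> (s*\<rho>)) x)
                    + ennreal q' * (ennreal (g x) * indicator (ann (s*\<rho>) M) x)"
    proof (cases "x \<in> ann \<rho> M")
      case False then show ?thesis by simp
    next
      case True
      show ?thesis
      proof (cases "norm x \<le> s * \<rho>")
        case True
        with \<open>x \<in> ann \<rho> M\<close> have "\<rho> < norm x" by (auto simp: ann_def)
        have "(norm x)^2 * (s^(DIM('a)+2) * f (s *\<^sub>R x)) \<le> (norm x)^2 * (q * f x)"
          using H1[OF \<open>\<rho> < norm x\<close> True] by (simp add: mult_left_mono)
        moreover have "q * g x = (norm x)^2 * (q * f x)" by (simp add: g_def)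
        ultimately have "s ^ DIM('a) * g (s *\<^sub>R x) \<le> q * g x" using eq by linarith
        then show ?thesis using True \<open>x \<in> ann \<rho> M\<close> q \<open>\<rho> < norm x\<close>
          by (auto simp: indicator_def ann_def ennreal_mult'[symmetric] intro!: ennreal_leI)
      next
        case False
        then have "s*\<rho> < norm x" by simp
        have "(norm x)^2 * (s^(DIM('a)+2) * f (s *\<^sub>R x)) \<le> (norm x)^2 * (q' * f x)"
          using H2[OF \<open>s*\<rho> < norm x\<close>] by (simp add: mult_left_mono)
        moreover have "q' * g x = (norm x)^2 * (q' * f x)" by (simp add: g_def)
        ultimately have "s ^ DIM('a) * g (s *\<^sub>R x) \<le> q' * g x" using eq by linarith
        then show ?thesis using False \<open>x \<in> ann \<rho> M\<close> q' \<open>s*\<rho> < norm x\<close>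
          by (auto simp: indicator_def ann_def ennreal_mult'[symmetric] intro!: ennreal_leI)
      qed
    qed
  qed
  also have "\<dots> = ennreal q * (\<integral>\<^sup>+x. ennreal (g x) * indicator (ann \<rho> (s*\<rho>)) x \<partial>lborel)
       + ennreal q' * (\<integral>\<^sup>+x. ennreal (g x) * indicator (ann (s*\<rho>) M) x \<partial>lborel)"
    by (simp add: nn_integral_add nn_integral_cmult)
  finally show ?thesis unfolding g_def .
qed

lemma ennreal_absorb:
  fixes K A :: ennreal
  assumes "K < \<infinity>" "A < \<infinity>" "K \<le> ennreal q * A + ennreal q' * K" "0 \<le> q" "0 \<le> q'" "q' < 1"
  shows "K \<le> ennreal (q/(1-q')) * A"
proof -
  obtain k where k: "K = ennreal k" "0 \<le> k" using assms(1) by (cases K rule: ennreal_cases) auto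
  obtain a where a: "A = ennreal a" "0 \<le> a" using assms(2) by (cases A rule: ennreal_cases) auto
  have e1: "ennreal (q*a + q'*k) = ennreal (q*a) + ennreal (q'*k)"
    by (rule ennreal_plus) (use assms k a in simp_all)
  have "ennreal k \<le> ennreal (q * a + q' * k)"
    unfolding e1 using assms(3-5) k a by (simp add: ennreal_mult)
  then have "k \<le> q * a + q' * k" by (subst (asm) ennreal_le_iff) (use assms k a in auto)
  then have "k * (1 - q') \<le> q * a" by (simp add: algebra_simps)
  then have "k \<le> q * a / (1 - q')" using assms(6) by (simp add: pos_le_divide_eq)
  then have "ennreal k \<le> ennreal (q/(1-q') * a)" by (intro ennreal_leI) (simp add: mult.commute)
  moreover have "ennreal (q/(1-q') * a) = ennreal (q/(1-q')) * ennreal a"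
    by (rule ennreal_mult) (use assms a in simp_all)
  ultimately show ?thesis using k a by simp
qed

lemma split3:
  fixes \<phi> :: "'a::euclidean_space \<Rightarrow> ennreal"
  assumes [measurable]: "\<phi> \<in> borel_measurable borel" and rho: "0 \<le> \<rho>" and s: "\<rho> \<le> t"
  shows "(\<integral>\<^sup>+x. \<phi> x \<partial>lborel) = (\<integral>\<^sup>+x. \<phi> x * indicator (cball 0 \<rho>) x \<partial>lborel)
     + (\<integral>\<^sup>+x. \<phi> x * indicator (ann \<rho> t) x \<partial>lborel) + (\<integral>\<^sup>+x. \<phi> x * indicator {x. t < norm x} x \<partial>lborel)"
proof -
  have [measurable]: "{x::'a. t < norm x} \<in> sets borel" by measurable
  have [measurable]: "cball (0::'a) \<rho> \<in> sets borel" by simp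
  have "(\<integral>\<^sup>+x. \<phi> x \<partial>lborel) = (\<integral>\<^sup>+x. \<phi> x * indicator (cball 0 \<rho>) x + \<phi> x * indicator (ann \<rho> t) x
      + \<phi> x * indicator {x. t < norm x} x \<partial>lborel)"
    using s by (intro nn_integral_cong) (auto simp: indicator_def ann_def)
  also have "\<dots> = (\<integral>\<^sup>+x. \<phi> x * indicator (cball 0 \<rho>) x + \<phi> x * indicator (ann \<rho> t) x \<partial>lborel)
      + (\<integral>\<^sup>+x. \<phi> x * indicator {x. t < norm x} x \<partial>lborel)"
    by (rule nn_integral_add) measurable
  also have "(\<integral>\<^sup>+x. \<phi> x * indicator (cball 0 \<rho>) x + \<phi> x * indicator (ann \<rho> t) x \<partial>lborel)
     = (\<integral>\<^sup>+x. \<phi> x * indicator (cball 0 \<rho>) x \<partial>lborel) + (\<integral>\<^sup>+x. \<phi> x * indicator (ann \<rho> t) x \<partial>lborel)"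
    by (rule nn_integral_add) measurable
  finally show ?thesis .
qed

lemma gen:
  fixes f :: "'a::euclidean_space \<Rightarrow> real"
  assumes cont: "continuous_on UNIV f" and pos: "\<And>x. f x > 0"
    and rho: "\<rho> > 0" and s: "s > 1" and q: "q \<ge> 0" and q': "q' \<ge> 0" "q' < 1"
    and H1: "\<And>x. \<rho> < norm x \<Longrightarrow> norm x \<le> s*\<rho> \<Longrightarrow> s^(DIM('a)+2) * f (s *\<^sub>R x) \<le> q * f x"
    and H2: "\<And>x. s*\<rho> < norm x \<Longrightarrow> s^(DIM('a)+2) * f (s *\<^sub>R x) \<le> q' * f x"
  shows "0 < (\<integral>\<^sup>+x. ennreal (f x) \<partial>lborel)" "(\<integral>\<^sup>+x. ennreal (f x) \<partial>lborel) < \<infinity>"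
    "(\<integral>\<^sup>+x. ennreal ((norm x)^2 * f x) \<partial>lborel)
       \<le> ennreal (s^2*\<rho>^2*(1 + q/(1-q'))) * (\<integral>\<^sup>+x. ennreal (f x) \<partial>lborel)"
proof -
  have fm[measurable]: "f \<in> borel_measurable borel" using cont borel_measurable_continuous_onI by blast
  define g where "g x = (norm x)^2 * f x" for x :: 'a
  have gm[measurable]: "g \<in> borel_measurable borel" unfolding g_def by measurable
  have gc: "continuous_on UNIV g" unfolding g_def by (intro continuous_intros cont)
  have outm[measurable]: "{x::'a. t < norm x} \<in> sets borel" for t by measurable
  define c' where "c' = q/(1-q')"
  have c'0: "c' \<ge> 0" unfolding c'_def using q q' by simp
  define A where "A = (\<integral>\<^sup>+x. ennreal (g x) * indicator (ann \<rho> (s*\<rho>)) x \<partial>lborel)"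
  have Afin: "A < \<infinity>" unfolding A_def by (rule loc_fin[OF gc ann_bounded ann_meas])
  define Kn where "Kn n = (\<integral>\<^sup>+x. ennreal (g x) * indicator (ann (s*\<rho>) (s*\<rho> + real n)) x \<partial>lborel)" for n :: nat
  have Kn: "Kn n \<le> ennreal c' * A" for n
  proof -
    have "Kn n < \<infinity>" unfolding Kn_def by (rule loc_fin[OF gc ann_bounded ann_meas])
    moreover have "Kn n \<le> ennreal q * A + ennreal q' * Kn n"
      unfolding Kn_def A_def g_def by (rule key_step[OF cont pos rho s q q' H1 H2]) auto
    ultimately show ?thesis unfolding c'_def by (rule ennreal_absorb[OF _ Afin _ q q'])
  qed
  define K where "K = (\<integral>\<^sup>+x. ennreal (g x) * indicator {x. s*\<rho> < norm x} x \<partial>lborel)"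
  have "K = (\<integral>\<^sup>+x. (SUP n. ennreal (g x) * indicator (ann (s*\<rho>) (s*\<rho> + real n)) x) \<partial>lborel)"
    unfolding K_def
  proof (intro nn_integral_cong)
    fix x :: 'a
    show "ennreal (g x) * indicator {x. s*\<rho> < norm x} x = (SUP n. ennreal (g x) * indicator (ann (s*\<rho>) (s*\<rho> + real n)) x)"
    proof (cases "s*\<rho> < norm x")
      case True
      obtain n :: nat where n: "norm x \<le> real n" using real_arch_simple by blast
      have "0 < s*\<rho>" using s rho by simp
      then have "norm x \<le> s*\<rho> + real n" using n by linarith
      then have "ennreal (g x) * indicator (ann (s*\<rho>) (s*\<rho> + real n)) x = ennreal (g x)"
        using True by (simp add: ann_def)
      moreover have "(SUP n. ennreal (g x) * indicator (ann (s*\<rho>) (s*\<rho> + real n)) x) \<le> ennreal (g x)"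
        by (intro SUP_least) (simp add: indicator_def)
      ultimately have "(SUP n. ennreal (g x) * indicator (ann (s*\<rho>) (s*\<rho> + real n)) x) = ennreal (g x)"
        by (metis (no_types, lifting) UNIV_I SUP_upper antisym)
      then show ?thesis using True by simp
    next
      case False
      then show ?thesis by (simp add: ann_def)
    qed
  qed
  also have "\<dots> = (SUP n. Kn n)" unfolding Kn_def
  proof (rule nn_integral_monotone_convergence_SUP)
    show "incseq (\<lambda>n x. ennreal (g x) * indicator (ann (s*\<rho>) (s*\<rho> + real n)) x)"
      by (auto simp: incseq_def le_fun_def indicator_def ann_def)
  qed measurable
  finally have Kle: "K \<le> ennreal c' * A" using Kn by (simp add: SUP_least)
  define F where "F S = (\<integral>\<^sup>+x. ennreal (f x) * indicator S x \<partial>lborel)" for S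
  have Aleq: "A \<le> ennreal (s^2*\<rho>^2) * F (ann \<rho> (s*\<rho>))"
  proof -
    have "A \<le> (\<integral>\<^sup>+x. ennreal (s^2*\<rho>^2) * (ennreal (f x) * indicator (ann \<rho> (s*\<rho>)) x) \<partial>lborel)"
      unfolding A_def
    proof (rule nn_integral_mono)
      fix x
      show "ennreal (g x) * indicator (ann \<rho> (s*\<rho>)) x \<le> ennreal (s^2*\<rho>^2) * (ennreal (f x) * indicator (ann \<rho> (s*\<rho>)) x)"
      proof (cases "x \<in> ann \<rho> (s*\<rho>)")
        case True
        then have "norm x \<le> s*\<rho>" "0 \<le> norm x" by (auto simp: ann_def)
        then have "(norm x)^2 \<le> (s*\<rho>)^2" by (intro power_mono) auto
        then have "g x \<le> s^2*\<rho>^2 * f x" unfolding g_def using pos[of x]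
          by (simp add: power_mult_distrib mult_right_mono)
        then show ?thesis using True pos[of x] by (simp add: ennreal_mult'[symmetric] ennreal_leI)
      qed simp
    qed
    also have "\<dots> = ennreal (s^2*\<rho>^2) * F (ann \<rho> (s*\<rho>))" unfolding F_def
      by (rule nn_integral_cmult) measurable
    finally show ?thesis .
  qed
  have Z0fin: "F (cball 0 \<rho>) < \<infinity>" unfolding F_def by (rule loc_fin[OF cont]) auto
  have ZAfin: "F (ann \<rho> (s*\<rho>)) < \<infinity>" unfolding F_def by (rule loc_fin[OF cont ann_bounded ann_meas])
  have ZKle: "ennreal ((s*\<rho>)^2) * F {x. s*\<rho> < norm x} \<le> K"
  proof -
    have "ennreal ((s*\<rho>)^2) * F {x. s*\<rho> < norm x} = (\<integral>\<^sup>+x. ennreal ((s*\<rho>)^2) * (ennreal (f x) * indicator {x. s*\<rho> < norm x} x) \<partial>lborel)"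
      unfolding F_def by (rule nn_integral_cmult[symmetric]) measurable
    also have "\<dots> \<le> K" unfolding K_def
    proof (rule nn_integral_mono)
      fix x :: 'a
      show "ennreal ((s*\<rho>)^2) * (ennreal (f x) * indicator {x. s*\<rho> < norm x} x) \<le> ennreal (g x) * indicator {x. s*\<rho> < norm x} x"
      proof (cases "s*\<rho> < norm x")
        case True
        have "0 \<le> s*\<rho>" using s rho by simp
        then have "(s*\<rho>)^2 \<le> (norm x)^2" using True by (intro power_mono) auto
        then have "(s*\<rho>)^2 * f x \<le> g x" unfolding g_def using pos[of x] by (simp add: mult_right_mono)
        then show ?thesis using True pos[of x] by (simp add: ennreal_mult'[symmetric] ennreal_leI)
      qed simp
    qed
    finally show ?thesis .
  qed
  have ZKfin: "F {x. s*\<rho> < norm x} < \<infinity>"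
  proof -
    have "ennreal c' * A < \<infinity>" using Afin by (simp add: ennreal_mult_less_top)
    then have "ennreal ((s*\<rho>)^2) * F {x. s*\<rho> < norm x} < \<infinity>" using ZKle Kle by (meson order.strict_trans1)
    moreover have "ennreal ((s*\<rho>)^2) \<noteq> 0" using s rho by simp
    ultimately show ?thesis by (auto simp: ennreal_mult_less_top)
  qed
  have Zsplit: "(\<integral>\<^sup>+x. ennreal (f x) \<partial>lborel) = F (cball 0 \<rho>) + F (ann \<rho> (s*\<rho>)) + F {x. s*\<rho> < norm x}"
    unfolding F_def by (rule split3) (use s rho in auto)
  show "0 < (\<integral>\<^sup>+x. ennreal (f x) \<partial>lborel)" by (rule zpos[OF fm pos])
  show "(\<integral>\<^sup>+x. ennreal (f x) \<partial>lborel) < \<infinity>" unfolding Zsplit using Z0fin ZAfin ZKfin by simp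
  have Gsplit: "(\<integral>\<^sup>+x. ennreal (g x) \<partial>lborel) = (\<integral>\<^sup>+x. ennreal (g x) * indicator (cball 0 \<rho>) x \<partial>lborel) + A + K"
    unfolding A_def K_def by (rule split3) (use s rho in auto)
  have G0: "(\<integral>\<^sup>+x. ennreal (g x) * indicator (cball 0 \<rho>) x \<partial>lborel) \<le> ennreal (\<rho>^2) * F (cball 0 \<rho>)"
  proof -
    have "(\<integral>\<^sup>+x. ennreal (g x) * indicator (cball 0 \<rho>) x \<partial>lborel) \<le> (\<integral>\<^sup>+x. ennreal (\<rho>^2) * (ennreal (f x) * indicator (cball 0 \<rho>) x) \<partial>lborel)"
    proof (rule nn_integral_mono)
      fix x :: 'a
      show "ennreal (g x) * indicator (cball 0 \<rho>) x \<le> ennreal (\<rho>^2) * (ennreal (f x) * indicator (cball 0 \<rho>) x)"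
      proof (cases "x \<in> cball 0 \<rho>")
        case True
        then have "(norm x)^2 \<le> \<rho>^2" by (intro power_mono) auto
        then have "g x \<le> \<rho>^2 * f x" unfolding g_def using pos[of x] by (simp add: mult_right_mono)
        then show ?thesis using True pos[of x] by (simp add: ennreal_mult'[symmetric] ennreal_leI)
      qed simp
    qed
    also have "\<dots> = ennreal (\<rho>^2) * F (cball 0 \<rho>)" unfolding F_def by (rule nn_integral_cmult) measurable
    finally show ?thesis .
  qed
  define C where "C = s^2*\<rho>^2*(1 + c')"
  have "\<rho>^2 \<le> C"
  proof -
    have "1 \<le> s^2" using s by simp
    moreover have "1 \<le> 1 + c'" using c'0 by simp
    ultimately have "1 \<le> s^2 * (1+c')" using mult_mono[of 1 "s^2" 1 "1+c'"] by simp
    then have "\<rho>^2 * 1 \<le> \<rho>^2 * (s^2*(1+c'))" by (intro mult_left_mono) auto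
    then show ?thesis unfolding C_def by (simp add: algebra_simps)
  qed
  have "(\<integral>\<^sup>+x. ennreal (g x) \<partial>lborel) \<le> ennreal (\<rho>^2) * F (cball 0 \<rho>) + (A + ennreal c' * A)"
    unfolding Gsplit using G0 Kle by (simp add: add.assoc add_mono)
  also have "A + ennreal c' * A = ennreal (1 + c') * A"
    using c'0 by (simp add: ennreal_plus distrib_right)
  also have "\<dots> \<le> ennreal (1 + c') * (ennreal (s^2*\<rho>^2) * F (ann \<rho> (s*\<rho>)))"
    by (intro mult_left_mono Aleq) simp
  also have "\<dots> = ennreal C * F (ann \<rho> (s*\<rho>))"
    unfolding C_def using c'0 by (simp add: ennreal_mult' mult.assoc mult.commute mult.left_commute)
  also have "ennreal (\<rho>^2) * F (cball 0 \<rho>) \<le> ennreal C * F (cball 0 \<rho>)"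
    using \<open>\<rho>^2 \<le> C\<close> by (intro mult_right_mono ennreal_leI) auto
  also have "ennreal C * F (cball 0 \<rho>) + ennreal C * F (ann \<rho> (s*\<rho>)) \<le> ennreal C * (\<integral>\<^sup>+x. ennreal (f x) \<partial>lborel)"
    unfolding Zsplit by (simp add: distrib_left)
  finally show "(\<integral>\<^sup>+x. ennreal ((norm x)^2 * f x) \<partial>lborel)
       \<le> ennreal (s^2*\<rho>^2*(1 + q/(1-q'))) * (\<integral>\<^sup>+x. ennreal (f x) \<partial>lborel)"
    unfolding g_def C_def c'_def by simp
qed

lemma num1: "(3/2::real) * exp (-(5/8)) \<le> 82/100"
proof -
  have a: "1 + 5/16 + (5/16)^2/2 \<le> exp (5/16::real)" by (rule exp_lower_Taylor_quadratic) simp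
  have "exp (5/8::real) = exp (5/16) ^ 2" using exp_double[of "5/16::real"] by simp
  also have "\<dots> \<ge> (1 + 5/16 + (5/16)^2/2) ^ 2" using a by (intro power_mono) auto
  moreover have "(150/82::real) \<le> (1 + 5/16 + (5/16)^2/2) ^ 2" by (simp add: power2_eq_square)
  ultimately have "exp (5/8::real) \<ge> 150/82" by linarith
  then show ?thesis by (simp add: exp_minus field_simps)
qed

lemma num2: "(3/2::real) * exp (-(45/32)) \<le> 4/10"
proof -
  have a: "1 + 45/64 + (45/64)^2/2 \<le> exp (45/64::real)" by (rule exp_lower_Taylor_quadratic) simp
  have "exp (45/32::real) = exp (45/64) ^ 2" using exp_double[of "45/64::real"] by simp
  also have "\<dots> \<ge> (1 + 45/64 + (45/64)^2/2) ^ 2" using a by (intro power_mono) auto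
  moreover have "(15/4::real) \<le> (1 + 45/64 + (45/64)^2/2) ^ 2" by (simp add: power2_eq_square)
  ultimately have "exp (45/32::real) \<ge> 15/4" by linarith
  then show ?thesis by (simp add: exp_minus field_simps)
qed

lemma pow_bound:
  fixes c b r :: real and n :: nat
  assumes "0 \<le> r" "r \<le> b" "b \<le> 1" "n \<ge> 3" "0 < c" "c * r' \<le> r" "r' = exp (- e)"
  shows "c ^ n * exp (- e * real n) \<le> b ^ 3"
proof -
  have "c ^ n * exp (- e * real n) = (c * r') ^ n"
    using assms(7) exp_of_nat_mult[of n "-e"] by (simp add: power_mult_distrib mult.commute)
  also have "\<dots> \<le> r ^ n" using assms by (intro power_mono) auto
  also have "\<dots> \<le> r ^ 3" using assms by (intro power_decreasing) auto
  also have "\<dots> \<le> b ^ 3" using assms by (intro power_mono) auto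
  finally show ?thesis .
qed

lemma gen2:
  fixes W :: "'a::euclidean_space \<Rightarrow> real"
  assumes cont: "continuous_on UNIV W" and Mpos: "M > 0" and rho: "\<rho> > 0"
    and big: "real DIM('a) + 2 \<le> M * \<rho>^2"
    and grow: "\<And>x. \<rho> < norm x \<Longrightarrow> W x + 5/8 * M * (norm x)^2 \<le> W ((3/2) *\<^sub>R x)"
  shows "0 < (\<integral>\<^sup>+x. ennreal (exp (- W x)) \<partial>lborel)" "(\<integral>\<^sup>+x. ennreal (exp (- W x)) \<partial>lborel) < \<infinity>"
    "(\<integral>\<^sup>+x. ennreal ((norm x)^2 * exp (- W x)) \<partial>lborel)
       \<le> ennreal (18/5 * \<rho>^2) * (\<integral>\<^sup>+x. ennreal (exp (- W x)) \<partial>lborel)"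
proof -
  let ?f = "\<lambda>x. exp (- W x)"
  let ?n = "DIM('a) + 2"
  have fc: "continuous_on UNIV ?f" by (intro continuous_intros cont)
  have n3: "?n \<ge> 3" using DIM_positive[where 'a='a] by linarith
  have base: "(3/2::real)^?n * exp (- W ((3/2) *\<^sub>R x)) \<le> ((3/2)^?n * exp (- e * real ?n)) * exp (- W x)"
    if "e * real ?n \<le> 5/8 * M * (norm x)^2" "\<rho> < norm x" for x e
  proof -
    have "exp (- W ((3/2) *\<^sub>R x)) \<le> exp (- e * real ?n - W x)"
      using grow[OF that(2)] that(1) by simp
    also have "\<dots> = exp (- e * real ?n) * exp (- W x)" by (simp add: exp_add[symmetric])
    finally show ?thesis by (simp add: mult.assoc mult_left_mono)
  qed
  have H1: "(3/2)^?n * ?f ((3/2) *\<^sub>R x) \<le> (82/100)^3 * ?f x" if "\<rho> < norm x" for x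
  proof -
    have "\<rho>^2 \<le> (norm x)^2" using that rho by (intro power_mono) auto
    then have "M * \<rho>^2 \<le> M * (norm x)^2" using Mpos by simp
    then have e1: "5/8 * real ?n \<le> 5/8 * M * (norm x)^2" using big by simp
    have "(3/2::real)^?n * exp (- W ((3/2) *\<^sub>R x)) \<le> ((3/2)^?n * exp (- (5/8) * real ?n)) * exp (- W x)"
      by (rule base[of "5/8" x, OF e1 that])
    also have "\<dots> \<le> (82/100)^3 * exp (- W x)"
      by (intro mult_right_mono pow_bound[OF _ _ _ n3 _ num1]) auto
    finally show ?thesis .
  qed
  have H2: "(3/2)^?n * ?f ((3/2) *\<^sub>R x) \<le> (4/10)^3 * ?f x" if "3/2*\<rho> < norm x" for x
  proof -
    have "(3/2*\<rho>)^2 \<le> (norm x)^2" using that rho by (intro power_mono) auto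
    then have "9/4*\<rho>^2 \<le> (norm x)^2" by (simp add: power_mult_distrib power_divide)
    then have "M * (9/4*\<rho>^2) \<le> M * (norm x)^2" using Mpos by simp
    then have e1: "45/32 * real ?n \<le> 5/8 * M * (norm x)^2" using big by simp
    have e2: "\<rho> < norm x" using that rho by simp
    have "(3/2::real)^?n * exp (- W ((3/2) *\<^sub>R x)) \<le> ((3/2)^?n * exp (- (45/32) * real ?n)) * exp (- W x)"
      by (rule base[of "45/32" x, OF e1 e2])
    also have "\<dots> \<le> (4/10)^3 * exp (- W x)"
      by (intro mult_right_mono pow_bound[OF _ _ _ n3 _ num2]) auto
    finally show ?thesis .
  qed
  have s: "(1::real) < 3/2" by simp
  have fpos: "\<And>x. ?f x > 0" by simp
  have q0: "(0::real) \<le> (82/100)^3" "(0::real) \<le> (4/10)^3" "(4/10::real)^3 < 1" by (simp_all add: power3_eq_cube)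
  note G = gen[OF fc fpos rho s q0 H1 H2]
  show "0 < (\<integral>\<^sup>+x. ennreal (exp (- W x)) \<partial>lborel)" "(\<integral>\<^sup>+x. ennreal (exp (- W x)) \<partial>lborel) < \<infinity>"
    using G by auto
  have "(\<integral>\<^sup>+x. ennreal ((norm x)^2 * exp (- W x)) \<partial>lborel)
       \<le> ennreal ((3/2)^2*\<rho>^2*(1 + (82/100)^3/(1-(4/10)^3))) * (\<integral>\<^sup>+x. ennreal (exp (- W x)) \<partial>lborel)"
    using G(3) by simp
  also have "\<dots> \<le> ennreal (18/5 * \<rho>^2) * (\<integral>\<^sup>+x. ennreal (exp (- W x)) \<partial>lborel)"
  proof (intro mult_right_mono ennreal_leI)
    have "(3/2::real)^2*(1 + (82/100)^3/(1-(4/10)^3)) \<le> 18/5" by (simp add: power2_eq_square power3_eq_cube)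
    then have "(3/2::real)^2*(1 + (82/100)^3/(1-(4/10)^3)) * \<rho>^2 \<le> 18/5 * \<rho>^2" by (intro mult_right_mono) auto
    then show "(3/2)^2*\<rho>^2*(1 + (82/100)^3/(1-(4/10)^3)) \<le> 18/5 * \<rho>^2" by (simp add: algebra_simps)
  qed simp
  finally show "(\<integral>\<^sup>+x. ennreal ((norm x)^2 * exp (- W x)) \<partial>lborel)
       \<le> ennreal (18/5 * \<rho>^2) * (\<integral>\<^sup>+x. ennreal (exp (- W x)) \<partial>lborel)" .
qed

lemma growth_U:
  fixes U :: "'a::euclidean_space \<Rightarrow> real" and gradU :: "'a \<Rightarrow> 'a"
  assumes deriv: "\<And>x. (U has_derivative (\<lambda>h. gradU x \<bullet> h)) (at x)"
    and grad0: "gradU 0 = 0" and Rpos: "R > 0"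
    and diss: "\<And>x y. norm (x - y) > R \<Longrightarrow> (gradU x - gradU y) \<bullet> (x - y) \<ge> m * (norm (x - y))\<^sup>2"
    and x: "norm x > R"
  shows "U x + 5/8 * m * (norm x)^2 \<le> U ((3/2) *\<^sub>R x)"
proof -
  define h where "h t = U (t *\<^sub>R x) - m * (norm x)^2 * t^2 / 2" for t :: real
  have hd: "(h has_real_derivative (gradU (t *\<^sub>R x) \<bullet> x - m * (norm x)^2 * t)) (at t)" for t
  proof -
    have "((\<lambda>t. U (t *\<^sub>R x)) has_derivative (\<lambda>k. gradU (t *\<^sub>R x) \<bullet> (k *\<^sub>R x))) (at t)"
      by (rule has_derivative_compose[OF _ deriv]) (auto intro!: derivative_eq_intros)
    then have "((\<lambda>t. U (t *\<^sub>R x)) has_real_derivative (gradU (t *\<^sub>R x) \<bullet> x)) (at t)"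
      by (rule has_derivative_imp_has_field_derivative) simp
    then show ?thesis unfolding h_def by (auto intro!: derivative_eq_intros)
  qed
  have "h 1 \<le> h (3/2)"
  proof (rule DERIV_nonneg_imp_increasing_open[of 1 "3/2" h])
    fix t :: real assume t: "1 < t" "t < 3/2"
    have "norm (t *\<^sub>R x) > R"
    proof -
      have "norm x \<le> t * norm x" using t by (simp add: mult_le_cancel_right1)
      then show ?thesis using x t by simp
    qed
    then have "m * (norm (t *\<^sub>R x))^2 \<le> gradU (t *\<^sub>R x) \<bullet> (t *\<^sub>R x)"
      using diss[of "t *\<^sub>R x" 0] grad0 by simp
    then have "t * (m * (norm x)^2 * t) \<le> t * (gradU (t *\<^sub>R x) \<bullet> x)"
      using t by (simp add: power_mult_distrib power2_eq_square algebra_simps)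
    then have "m * (norm x)^2 * t \<le> gradU (t *\<^sub>R x) \<bullet> x" using t by simp
    then show "\<exists>y. (h has_real_derivative y) (at t) \<and> 0 \<le> y" using hd[of t] by (intro exI[of _ "gradU (t *\<^sub>R x) \<bullet> x - m * (norm x)^2 * t"]) simp
  next
    show "continuous_on {1..3/2} h"
      using hd by (meson DERIV_isCont continuous_at_imp_continuous_on)
  qed simp
  then show ?thesis unfolding h_def by (simp add: power2_eq_square algebra_simps)
qed

lemma fub:
  fixes F :: "'a::euclidean_space \<times> 'b::euclidean_space \<Rightarrow> ennreal"
  assumes Fm: "F \<in> borel_measurable (lborel \<Otimes>\<^sub>M lborel)"
  shows "(\<integral>\<^sup>+z. F z \<partial>lborel) = (\<integral>\<^sup>+x. \<integral>\<^sup>+u. F (x,u) \<partial>lborel \<partial>lborel)"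
proof -
  have "(\<integral>\<^sup>+x. \<integral>\<^sup>+u. F (x,u) \<partial>lborel \<partial>lborel) = integral\<^sup>N (lborel \<Otimes>\<^sub>M lborel) F"
    by (rule sigma_finite_measure.nn_integral_fst[OF sigma_finite_lborel Fm])
  then show ?thesis by (simp add: lborel_prod)
qed

lemma prod_int:
  fixes f :: "'a::euclidean_space \<Rightarrow> real" and g :: "'b::euclidean_space \<Rightarrow> real"
  assumes [measurable]: "f \<in> borel_measurable borel" "g \<in> borel_measurable borel"
    and "\<And>x. f x \<ge> 0" "\<And>u. g u \<ge> 0"
  shows "(\<integral>\<^sup>+z. ennreal (f (fst z) * g (snd z)) \<partial>lborel) = (\<integral>\<^sup>+x. ennreal (f x) \<partial>lborel) * (\<integral>\<^sup>+u. ennreal (g u) \<partial>lborel)"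
proof -
  have "(\<integral>\<^sup>+z. ennreal (f (fst z) * g (snd z)) \<partial>lborel) = (\<integral>\<^sup>+x. \<integral>\<^sup>+u. ennreal (f x) * ennreal (g u) \<partial>lborel \<partial>lborel)"
    using assms(3,4) by (subst fub) (auto simp: ennreal_mult)
  also have "\<dots> = (\<integral>\<^sup>+x. ennreal (f x) * (\<integral>\<^sup>+u. ennreal (g u) \<partial>lborel) \<partial>lborel)"
    by (intro nn_integral_cong nn_integral_cmult) measurable
  also have "\<dots> = (\<integral>\<^sup>+x. ennreal (f x) \<partial>lborel) * (\<integral>\<^sup>+u. ennreal (g u) \<partial>lborel)"
    by (rule nn_integral_multc) measurable
  finally show ?thesis .
qed


lemma final_arith:
  fixes t r a b :: real
  assumes "0 \<le> t" "0 \<le> r" "a \<le> r + 3 * t" "b \<le> 3 * t / 1000"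
  shows "3 * (18/5 * a) + 2 * (18/5 * b) \<le> 36 * (r + t)"
  using assms by (simp add: field_simps)

theorem lemma23:
  fixes U :: "'a::euclidean_space \<Rightarrow> real" and gradU :: "'a \<Rightarrow> 'a"
    and L m R :: real
  assumes deriv: "\<And>x. (U has_derivative (\<lambda>h. gradU x \<bullet> h)) (at x)"
    and cont: "continuous_on UNIV gradU"
    and Lpos: "L > 0"
    and lip: "\<And>x y. norm (gradU x - gradU y) \<le> L * norm (x - y)"
    and grad0: "gradU 0 = 0"
    and mpos: "m > 0" and Rpos: "R > 0"
    and diss: "\<And>x y. norm (x - y) > R \<Longrightarrow>
                 (gradU x - gradU y) \<bullet> (x - y) \<ge> m * (norm (x - y))\<^sup>2"
  shows "0 < (\<integral>\<^sup>+ z. ennreal (pstar_dens U L m z) \<partial>lborel)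
       \<and> (\<integral>\<^sup>+ z. ennreal (pstar_dens U L m z) \<partial>lborel) < \<infinity>
       \<and> (\<integral>\<^sup>+ z. ennreal (((norm (fst z))\<^sup>2 + (norm (fst z + snd z))\<^sup>2) * pstar_dens U L m z) \<partial>lborel)
           / (\<integral>\<^sup>+ z. ennreal (pstar_dens U L m z) \<partial>lborel)
         \<le> ennreal (36 * (R\<^sup>2 + real DIM('a) / m))"
proof -
  let ?d = "real DIM('a)"
  have Ucont: "continuous_on UNIV U"
    using deriv by (meson continuous_at_imp_continuous_on has_derivative_continuous)
  have Um[measurable]: "U \<in> borel_measurable borel" using Ucont borel_measurable_continuous_onI by blast
  have mL: "m \<le> L"
  proof -
    obtain b :: 'a where b: "b \<in> Basis" using nonempty_Basis by blast
    define x where "x = (2*R) *\<^sub>R b"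
    have nx: "norm x = 2*R" using b Rpos by (simp add: x_def)
    then have "m * (norm x)^2 \<le> gradU x \<bullet> x" using diss[of x 0] grad0 Rpos by simp
    also have "\<dots> \<le> norm (gradU x) * norm x" by (rule norm_cauchy_schwarz)
    also have "\<dots> \<le> L * norm x * norm x" using lip[of x 0] grad0 by (simp add: mult_right_mono)
    finally have "m * (norm x)^2 \<le> L * (norm x)^2" by (simp add: power2_eq_square)
    then show ?thesis using nx Rpos by simp
  qed
  define a where "a = 1000 * (L / m) * L / 2"
  have apos: "a > 0" unfolding a_def using Lpos mpos by simp
  have dens: "pstar_dens U L m z = exp (- U (fst z)) * exp (- (a * (norm (snd z))^2))" for z
    by (cases z) (simp add: pstar_dens_def a_def exp_diff exp_minus field_simps)
  define \<rho>1 where "\<rho>1 = sqrt (R^2 + (?d + 2) / m)"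
  have \<rho>1sq: "\<rho>1^2 = R^2 + (?d+2)/m" unfolding \<rho>1_def using mpos by (intro real_sqrt_pow2) auto
  have R\<rho>1: "R \<le> \<rho>1" unfolding \<rho>1_def using Rpos mpos
    by (intro real_le_rsqrt) auto
  have \<rho>1pos: "\<rho>1 > 0" using R\<rho>1 Rpos by simp
  have big1: "?d + 2 \<le> m * \<rho>1^2" unfolding \<rho>1sq using mpos by (simp add: field_simps)
  have grow1: "U x + 5/8 * m * (norm x)^2 \<le> U ((3/2) *\<^sub>R x)" if "\<rho>1 < norm x" for x
    by (rule growth_U[OF deriv grad0 Rpos diss]) (use that R\<rho>1 in auto)
  note G1 = gen2[OF Ucont mpos \<rho>1pos big1 grow1]
  define V where "V u = a * (norm u)^2" for u :: 'a
  have Vcont: "continuous_on UNIV V" unfolding V_def by (intro continuous_intros)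
  define \<rho>2 where "\<rho>2 = sqrt ((?d + 2) / (2*a))"
  have \<rho>2sq: "\<rho>2^2 = (?d+2)/(2*a)" unfolding \<rho>2_def using apos by (intro real_sqrt_pow2) auto
  have \<rho>2pos: "\<rho>2 > 0" unfolding \<rho>2_def using apos by simp
  have big2: "?d + 2 \<le> (2*a) * \<rho>2^2" unfolding \<rho>2sq using apos by simp
  have grow2: "V x + 5/8 * (2*a) * (norm x)^2 \<le> V ((3/2) *\<^sub>R x)" for x
    unfolding V_def by (simp add: power_mult_distrib power2_eq_square)
  have a2: "2*a > 0" using apos by simp
  note G2 = gen2[OF Vcont a2 \<rho>2pos big2 grow2]
  define Z1 where "Z1 = (\<integral>\<^sup>+x. ennreal (exp (- U x)) \<partial>lborel)"
  define Z2 where "Z2 = (\<integral>\<^sup>+x. ennreal (exp (- V x)) \<partial>lborel)"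
  define Q1 where "Q1 = (\<integral>\<^sup>+x. ennreal ((norm x)^2 * exp (- U x)) \<partial>lborel)"
  define Q2 where "Q2 = (\<integral>\<^sup>+x. ennreal ((norm x)^2 * exp (- V x)) \<partial>lborel)"
  have Vm[measurable]: "V \<in> borel_measurable borel" using Vcont borel_measurable_continuous_onI by blast
  have fstm[measurable]: "(fst :: 'a\<times>'a \<Rightarrow> 'a) \<in> borel_measurable borel"
    by (intro borel_measurable_continuous_onI continuous_on_fst continuous_on_id)
  have sndm[measurable]: "(snd :: 'a\<times>'a \<Rightarrow> 'a) \<in> borel_measurable borel"
    by (intro borel_measurable_continuous_onI continuous_on_snd continuous_on_id)
  have Zeq: "(\<integral>\<^sup>+ z. ennreal (pstar_dens U L m z) \<partial>lborel) = Z1 * Z2"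
    unfolding dens Z1_def Z2_def V_def by (rule prod_int) auto
  have Z1: "0 < Z1" "Z1 < \<infinity>" using G1 unfolding Z1_def by auto
  have Z2: "0 < Z2" "Z2 < \<infinity>" using G2 unfolding Z2_def by auto
  have Zpos: "0 < Z1 * Z2" using Z1 Z2 by (simp add: ennreal_zero_less_mult_iff)
  have Zfin: "Z1 * Z2 < \<infinity>" using Z1 Z2 by (simp add: ennreal_mult_less_top)
  have num: "(\<integral>\<^sup>+ z. ennreal (((norm (fst z))\<^sup>2 + (norm (fst z + snd z))\<^sup>2) * pstar_dens U L m z) \<partial>lborel)
     \<le> 3 * Q1 * Z2 + 2 * Z1 * Q2"
  proof -
    have "(\<integral>\<^sup>+ z. ennreal (((norm (fst z))\<^sup>2 + (norm (fst z + snd z))\<^sup>2) * pstar_dens U L m z) \<partial>lborel)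
      \<le> (\<integral>\<^sup>+ z. ennreal (3 * ((norm (fst z))^2 * exp (- U (fst z)) * exp (- V (snd z))))
              + ennreal (2 * (exp (- U (fst z)) * ((norm (snd z))^2 * exp (- V (snd z))))) \<partial>lborel)"
    proof (rule nn_integral_mono)
      fix z :: "'a \<times> 'a"
      obtain x u where z: "z = (x, u)" by (cases z)
      have "(norm (x + u))^2 \<le> (norm x + norm u)^2" by (intro power_mono norm_triangle_ineq) auto
      also have "\<dots> \<le> 2 * (norm x)^2 + 2 * (norm u)^2"
        by (smt (verit) power2_eq_square sum_squares_ge_zero mult_nonneg_nonneg norm_ge_zero
            power2_sum power2_diff)
      finally have "(norm x)^2 + (norm (x+u))^2 \<le> 3 * (norm x)^2 + 2 * (norm u)^2" by simp
      then have "((norm x)^2 + (norm (x+u))^2) * (exp (- U x) * exp (- V u))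
          \<le> (3 * (norm x)^2 + 2 * (norm u)^2) * (exp (- U x) * exp (- V u))"
        by (intro mult_right_mono) auto
      then have r: "((norm x)^2 + (norm (x+u))^2) * (exp (- U x) * exp (- V u))
          \<le> 3 * ((norm x)^2 * exp (- U x) * exp (- V u)) + 2 * (exp (- U x) * ((norm u)^2 * exp (- V u)))"
        by (simp add: algebra_simps)
      have "ennreal (((norm x)^2 + (norm (x+u))^2) * (exp (- U x) * exp (- V u)))
          \<le> ennreal (3 * ((norm x)^2 * exp (- U x) * exp (- V u)) + 2 * (exp (- U x) * ((norm u)^2 * exp (- V u))))"
        by (rule ennreal_leI[OF r])
      also have "\<dots> = ennreal (3 * ((norm x)^2 * exp (- U x) * exp (- V u))) + ennreal (2 * (exp (- U x) * ((norm u)^2 * exp (- V u))))"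
        by (rule ennreal_plus) auto
      finally have fin: "ennreal (((norm x)^2 + (norm (x+u))^2) * (exp (- U x) * exp (- V u)))
          \<le> ennreal (3 * ((norm x)^2 * exp (- U x) * exp (- V u))) + ennreal (2 * (exp (- U x) * ((norm u)^2 * exp (- V u))))" .
      have dz: "pstar_dens U L m z = exp (- U x) * exp (- V u)" unfolding dens z V_def by simp
      show "ennreal (((norm (fst z))\<^sup>2 + (norm (fst z + snd z))\<^sup>2) * pstar_dens U L m z)
          \<le> ennreal (3 * ((norm (fst z))^2 * exp (- U (fst z)) * exp (- V (snd z))))
              + ennreal (2 * (exp (- U (fst z)) * ((norm (snd z))^2 * exp (- V (snd z)))))"
        unfolding dz using fin by (simp add: z)
    qed
    also have "\<dots> = (\<integral>\<^sup>+ z. ennreal (3 * ((norm (fst z))^2 * exp (- U (fst z)) * exp (- V (snd z)))) \<partial>lborel)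
              + (\<integral>\<^sup>+ z. ennreal (2 * (exp (- U (fst z)) * ((norm (snd z))^2 * exp (- V (snd z))))) \<partial>lborel)"
      by (rule nn_integral_add) measurable
    also have "(\<integral>\<^sup>+ z. ennreal (3 * ((norm (fst z))^2 * exp (- U (fst z)) * exp (- V (snd z)))) \<partial>lborel)
         = 3 * (\<integral>\<^sup>+ z. ennreal ((norm (fst z))^2 * exp (- U (fst z)) * exp (- V (snd z))) \<partial>lborel)"
      by (simp add: ennreal_mult nn_integral_cmult)
    also have "(\<integral>\<^sup>+ z. ennreal ((norm (fst z))^2 * exp (- U (fst z)) * exp (- V (snd z))) \<partial>lborel) = Q1 * Z2"
      unfolding Q1_def Z2_def by (rule prod_int) auto
    also have "(\<integral>\<^sup>+ z. ennreal (2 * (exp (- U (fst z)) * ((norm (snd z))^2 * exp (- V (snd z))))) \<partial>lborel)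
         = 2 * (\<integral>\<^sup>+ z. ennreal (exp (- U (fst z)) * ((norm (snd z))^2 * exp (- V (snd z)))) \<partial>lborel)"
      by (simp add: ennreal_mult nn_integral_cmult)
    also have "(\<integral>\<^sup>+ z. ennreal (exp (- U (fst z)) * ((norm (snd z))^2 * exp (- V (snd z)))) \<partial>lborel) = Z1 * Q2"
      unfolding Q2_def Z1_def by (rule prod_int) auto
    finally show ?thesis by (simp add: mult.assoc)
  qed
  define C1 where "C1 = 18/5 * \<rho>1^2"
  define C2 where "C2 = 18/5 * \<rho>2^2"
  have Q1: "Q1 \<le> ennreal C1 * Z1" using G1(3) unfolding Q1_def Z1_def C1_def .
  have Q2: "Q2 \<le> ennreal C2 * Z2" using G2(3) unfolding Q2_def Z2_def C2_def .
  have "3 * Q1 * Z2 + 2 * Z1 * Q2 \<le> 3 * (ennreal C1 * Z1) * Z2 + 2 * Z1 * (ennreal C2 * Z2)"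
    by (intro add_mono mult_left_mono mult_right_mono Q1 Q2) auto
  also have "\<dots> = (Z1 * Z2) * (3 * ennreal C1 + 2 * ennreal C2)"
    by (simp add: algebra_simps)
  also have "3 * ennreal C1 + 2 * ennreal C2 = ennreal (3 * C1 + 2 * C2)"
  proof -
    have c: "C1 \<ge> 0" "C2 \<ge> 0" unfolding C1_def C2_def by auto
    have "ennreal (3 * C1 + 2 * C2) = ennreal (3 * C1) + ennreal (2 * C2)" using c by (intro ennreal_plus) auto
    also have "ennreal (3 * C1) = ennreal 3 * ennreal C1" using c by (intro ennreal_mult) auto
    also have "ennreal (2 * C2) = ennreal 2 * ennreal C2" using c by (intro ennreal_mult) auto
    finally show ?thesis by simp
  qed
  finally have numb: "(\<integral>\<^sup>+ z. ennreal (((norm (fst z))\<^sup>2 + (norm (fst z + snd z))\<^sup>2) * pstar_dens U L m z) \<partial>lborel)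
     \<le> (Z1 * Z2) * ennreal (3 * C1 + 2 * C2)" using num by (rule order.trans[rotated])
  have "3 * C1 + 2 * C2 \<le> 36 * (R^2 + ?d / m)"
  proof -
    have d1: "?d \<ge> 1" using DIM_positive[where 'a='a] by linarith
    have "(?d + 2) / (2*a) = (?d + 2) * m / (1000 * L * L)" unfolding a_def using mpos Lpos by (simp add: field_simps)
    also have "\<dots> \<le> (?d + 2) / (1000 * m)"
    proof -
      have "m * m \<le> L * L" using mL mpos by (intro mult_mono) auto
      then have "(m*m)*(2000 + ?d*1000) \<le> (L*L)*(2000 + ?d*1000)" by (intro mult_right_mono) auto
      then have "m * (m * 2000) + m * (m * (?d * 1000)) \<le> L * (L * 2000) + L * (L * (?d * 1000))"
        by (simp add: algebra_simps)
      then show ?thesis using mpos Lpos d1 by (simp add: field_simps)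
    qed
    finally have r2: "\<rho>2^2 \<le> (?d + 2) / (1000 * m)" unfolding \<rho>2sq .
    have "(?d + 2)/m \<le> 3 * (?d / m)" using d1 mpos by (simp add: field_simps)
    then have r1: "\<rho>1^2 \<le> R^2 + 3 * (?d/m)" unfolding \<rho>1sq by simp
    have "(?d + 2) / (1000*m) \<le> 3 * (?d/m) / 1000" using d1 mpos by (simp add: field_simps)
    then have r2': "\<rho>2^2 \<le> 3 * (?d/m) / 1000" using r2 by linarith
    have "?d / m \<ge> 0" using mpos by simp
    moreover have "R^2 \<ge> 0" by simp
    ultimately show ?thesis unfolding C1_def C2_def using r1 r2' by (rule final_arith)
  qed
  then have numb2: "(\<integral>\<^sup>+ z. ennreal (((norm (fst z))\<^sup>2 + (norm (fst z + snd z))\<^sup>2) * pstar_dens U L m z) \<partial>lborel)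
     \<le> (Z1 * Z2) * ennreal (36 * (R^2 + ?d / m))"
    using numb by (meson ennreal_leI mult_left_mono order.trans zero_le)
  show ?thesis unfolding Zeq using Zpos Zfin numb2
    by (auto intro: divide_le_posI_ennreal)
qed
end
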